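(* Let $n$ be a prime number, let $S\subseteq\{1,2,\ldots,\lfloor n/2\rfloor\}$, let $G=C_n(S)$ be the circulant graph on $S$, and let $\Delta=\Delta(G)$ be its independence complex. Then for every integer $k$ with $1\le k\le\dim\Delta$, the simplicial complex $\Delta^{[k]}$ is connected.
   Context: For $k\in\mathbb{Z}$ write $|k|_n=\min\{|k|,\,n-|k|\}$. The circulant graph $C_n(S)$ has vertex set $\mathbb{Z}_n=\{0,1,\ldots,n-1\}$ and edge set $\{\{i,j\} : |j-i|_n\in S\}$. The independence complex $\Delta(G)$ is the simplicial complex on $V(G)$ whose faces are the independent sets of $G$; the dimension of a face $F$ is $|F|-1$ and $\dim\Delta$ is the maximum dimension of a face. For $0\le k\le\dim\Delta$, $\Delta^{[k]}$ is the pure simplicial complex whose facets are exactly the faces of $\Delta$ of dimension $k$. A simplicial complex is connected if the graph formed by its vertices and its $1$-dimensional faces is connected. *)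

theory Defs
  imports "HOL-Computational_Algebra.Primes"
begin

definition cdist :: "nat \<Rightarrow> nat \<Rightarrow> nat \<Rightarrow> nat" where
  "cdist n i j = min (nat \<bar>int j - int i\<bar>) (n - nat \<bar>int j - int i\<bar>)"

definition circulant_edges :: "nat \<Rightarrow> nat set \<Rightarrow> nat set set" where
  "circulant_edges n S = {{i, j} | i j. i < n \<and> j < n \<and> cdist n i j \<in> S}"

definition ind_complex :: "'a set \<Rightarrow> 'a set set \<Rightarrow> 'a set set" where
  "ind_complex V E = {F. F \<subseteq> V \<and> (\<forall>e\<in>E. \<not> e \<subseteq> F)}"

definition complex_dim :: "'a set set \<Rightarrow> nat" where
  "complex_dim K = Max (card ` K) - 1"

definition pure_skel :: "'a set set \<Rightarrow> nat \<Rightarrow> 'a set set" where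
  "pure_skel K k = {G. \<exists>F\<in>K. card F = k + 1 \<and> G \<subseteq> F}"

definition complex_connected :: "'a set set \<Rightarrow> bool" where
  "complex_connected K \<longleftrightarrow>
     (\<forall>u v. {u} \<in> K \<longrightarrow> {v} \<in> K \<longrightarrow>
        (u, v) \<in> {(x, y). x \<noteq> y \<and> {x, y} \<in> K}\<^sup>*)"

end

theory Submission imports Defs "HOL-Number_Theory.Number_Theory" begin
lemma cdist_mod: assumes "i<n" "j<n"
  shows "cdist n i j = min (nat ((int j - int i) mod int n)) (nat ((int i - int j) mod int n))"
proof (cases "i \<le> j")
  case True
  then show ?thesis
  proof (cases "i = j")
    case False
    with True assms have a: "(int j - int i) mod int n = int j - int i" by (intro mod_pos_pos_trivial) auto
    have b: "(int i - int j) mod int n = int n - (int j - int i)"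
    proof -
      have "(int i - int j) mod int n = (int i - int j + int n) mod int n" by simp
      also have "\<dots> = int i - int j + int n" using True False assms by (intro mod_pos_pos_trivial) auto
      finally show ?thesis by simp
    qed
    have c: "nat \<bar>int j - int i\<bar> = j - i" using True by auto
    show ?thesis unfolding cdist_def a b c using True False assms by auto
  qed (simp add: cdist_def)
next
  case False
  with assms have a: "(int i - int j) mod int n = int i - int j" by (intro mod_pos_pos_trivial) auto
  have b: "(int j - int i) mod int n = int n - (int i - int j)"
  proof -
    have "(int j - int i) mod int n = (int j - int i + int n) mod int n" by simp
    also have "\<dots> = int j - int i + int n" using False assms by (intro mod_pos_pos_trivial) auto
    finally show ?thesis by simp
  qed
  have c: "nat \<bar>int j - int i\<bar> = i - j" using False by auto
  show ?thesis unfolding cdist_def a b c using False assms by auto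
qed

lemma cdist_rot: assumes "i<n" "j<n"
  shows "cdist n ((i+t) mod n) ((j+t) mod n) = cdist n i j"
proof -
  have n: "n > 0" using assms by simp
  have e: "(int ((b+t) mod n) - int ((a+t) mod n)) mod int n = (int b - int a) mod int n" for a b
  proof -
    have "(int ((b+t) mod n) - int ((a+t) mod n)) mod int n = (int (b+t) - int (a+t)) mod int n"
      by (simp add: of_nat_mod mod_diff_eq)
    thus ?thesis by simp
  qed
  show ?thesis using cdist_mod[OF assms] cdist_mod[of "(i+t) mod n" n "(j+t) mod n"] n e[of j i] e[of i j]
    by simp
qed

lemma rot_inj: fixes n :: nat assumes "0 < n" shows "inj_on (\<lambda>x. (x+t) mod n) {0..<n}"
proof (rule inj_onI)
  fix x y assume "x \<in> {0..<n}" "y \<in> {0..<n}" "(x+t) mod n = (y+t) mod n"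
  hence "[x + t = y + t] (mod n)" "x < n" "y < n" by (auto simp: cong_def)
  hence "[x = y] (mod n)" "x < n" "y < n" using cong_add_rcancel_nat by auto
  thus "x = y" by (simp add: cong_def)
qed

lemma rot_ind:
  assumes F: "F \<in> ind_complex {0..<n} (circulant_edges n S)" and n: "0 < n"
  shows "(\<lambda>x. (x+t) mod n) ` F \<in> ind_complex {0..<n} (circulant_edges n S)"
proof -
  have Fs: "F \<subseteq> {0..<n}" and Fi: "\<forall>e\<in>circulant_edges n S. \<not> e \<subseteq> F"
    using F by (auto simp: ind_complex_def)
  have "\<not> e \<subseteq> (\<lambda>x. (x+t) mod n) ` F" if e: "e \<in> circulant_edges n S" for e
  proof
    assume sub: "e \<subseteq> (\<lambda>x. (x+t) mod n) ` F"
    obtain i j where ij: "e = {i, j}" "i < n" "j < n" "cdist n i j \<in> S"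
      using e by (auto simp: circulant_edges_def)
    obtain i' j' where i'j': "i' \<in> F" "j' \<in> F" "i = (i'+t) mod n" "j = (j'+t) mod n"
      using sub ij(1) by blast
    have "i' < n" "j' < n" using i'j' Fs by auto
    hence "cdist n i' j' \<in> S" using cdist_rot ij i'j' by metis
    hence "{i', j'} \<in> circulant_edges n S" using \<open>i' < n\<close> \<open>j' < n\<close>
      by (auto simp: circulant_edges_def)
    thus False using Fi i'j' by auto
  qed
  thus ?thesis using n by (auto simp: ind_complex_def)
qed

theorem lemma3p2:
  fixes n k :: nat and S :: "nat set"
  assumes "prime n"
    and "S \<subseteq> {1..n div 2}"
    and "1 \<le> k"
    and "k \<le> complex_dim (ind_complex {0..<n} (circulant_edges n S))"
  shows "complex_connected (pure_skel (ind_complex {0..<n} (circulant_edges n S)) k)"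
proof -
  define K where "K = ind_complex {0..<n} (circulant_edges n S)"
  define R where "R = {(x, y). x \<noteq> y \<and> {x, y} \<in> pure_skel K k}"
  have n: "n > 1" using assms(1) prime_gt_1_nat by blast
  have Kfin: "finite K" 
  proof (rule finite_subset)
    show "K \<subseteq> Pow {0..<n}" by (auto simp: K_def ind_complex_def)
  qed simp
  have Kne: "{} \<in> K" by (auto simp: K_def ind_complex_def circulant_edges_def)
  obtain F0 where F0: "F0 \<in> K" "card F0 = Max (card ` K)"
    using Max_in[of "card ` K"] Kfin Kne by (metis empty_iff finite_imageI image_iff image_is_empty)
  have "k + 1 \<le> card F0" using assms(3,4) F0 unfolding K_def[symmetric] complex_dim_def by linarith
  have F0fin: "finite F0" using F0(1) by (auto simp: K_def ind_complex_def intro: finite_subset)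
  obtain F where F: "F \<subseteq> F0" "card F = k + 1"
    using obtain_subset_with_card_n[OF \<open>k + 1 \<le> card F0\<close>] by metis
  have FK: "F \<in> K" using F(1) F0(1) unfolding K_def ind_complex_def by blast
  have Ffin: "finite F" using F(1) F0fin finite_subset by blast
  have Fs: "F \<subseteq> {0..<n}" using FK by (auto simp: K_def ind_complex_def)
  obtain a where a: "a \<in> F" using F(2) by fastforce
  have "card (F - {a}) = k" using F(2) a Ffin by simp
  hence "F - {a} \<noteq> {}" using assms(3) by (metis card.empty not_one_le_zero)
  then obtain b where b: "b \<in> F" "b \<noteq> a" by blast
  have an: "a < n" "b < n" using a b Fs by auto
  define d where "d = (b + n - a) mod n"
  have d0: "d \<noteq> 0" "d < n"
  proof -
    show "d < n" using n by (simp add: d_def)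
    show "d \<noteq> 0"
    proof (cases "a < b")
      case True
      hence "b + n - a = (b - a) + n" by simp
      hence "d = (b - a) mod n" by (simp add: d_def)
      also have "\<dots> = b - a" using an by simp
      finally show ?thesis using True by simp
    next
      case False
      hence "b + n - a < n" "0 < b + n - a" using b an by auto
      thus ?thesis by (simp add: d_def)
    qed
  qed
  have edge: "(x, (x + d) mod n) \<in> R" if x: "x < n" for x
  proof -
    define t where "t = x + n - a"
    let ?r = "\<lambda>y. (y + t) mod n"
    have ra: "?r a = x" using an x by (simp add: t_def)
    have "?r b = (x + (b + n - a)) mod n" using an by (simp add: t_def algebra_simps)
    also have "\<dots> = (x + d) mod n" by (simp add: d_def mod_add_right_eq)
    finally have rb: "?r b = (x + d) mod n" .
    have rK: "?r ` F \<in> K" using rot_ind FK n unfolding K_def by auto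
    have "card (?r ` F) = k + 1"
      using card_image[OF inj_on_subset[OF rot_inj Fs]] F(2) n by auto
    moreover have "{x, (x + d) mod n} \<subseteq> ?r ` F"
      using ra rb a b(1) by (metis empty_subsetI image_eqI insert_subset)
    ultimately have sk: "{x, (x + d) mod n} \<in> pure_skel K k"
      unfolding pure_skel_def using rK by blast
    have "x \<noteq> (x + d) mod n"
    proof
      assume "x = (x + d) mod n"
      hence "[x + 0 = x + d] (mod n)" using x by (simp add: cong_def)
      hence "[0 = d] (mod n)" using cong_add_lcancel_nat by blast
      thus False using d0 by (simp add: cong_def)
    qed
    thus ?thesis using sk by (simp add: R_def)
  qed
  have reach: "(x, (x + m * d) mod n) \<in> R\<^sup>*" if x: "x < n" for x m
  proof (induction m)
    case 0 thus ?case using x by simp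
  next
    case (Suc m)
    define y where "y = (x + m * d) mod n"
    have "y < n" using n by (simp add: y_def)
    have "(y + d) mod n = (x + Suc m * d) mod n" unfolding y_def by (simp add: mod_add_left_eq) (simp add: algebra_simps)
    thus ?case using Suc edge[OF \<open>y < n\<close>] y_def by (metis rtrancl.rtrancl_into_rtrancl)
  qed
  have cop: "coprime d n"
  proof -
    have "\<not> n dvd d" using d0 by (auto dest: dvd_imp_le)
    thus ?thesis using prime_imp_coprime[OF assms(1)] coprime_commute by blast
  qed
  obtain z where z: "[d * z = Suc 0] (mod n)" using cong_solve_coprime_nat[OF cop] by blast
  have skK: "u < n" if "{u} \<in> pure_skel K k" for u
    using that Fs by (auto simp: pure_skel_def K_def ind_complex_def)
  show ?thesis unfolding complex_connected_def K_def[symmetric] R_def[symmetric]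
  proof (intro allI impI)
    fix u v assume "{u} \<in> pure_skel K k" "{v} \<in> pure_skel K k"
    hence uv: "u < n" "v < n" using skK by auto
    define m where "m = z * (v + n - u)"
    have "[d * z * (v + n - u) = Suc 0 * (v + n - u)] (mod n)" using z by (rule cong_mult) simp
    hence "[u + m * d = u + (v + n - u)] (mod n)"
      by (intro cong_add) (auto simp: m_def algebra_simps)
    moreover have "u + (v + n - u) = v + n" using uv by simp
    ultimately have "(u + m * d) mod n = v" using uv by (simp add: cong_def)
    thus "(u, v) \<in> R\<^sup>*" using reach[OF uv(1), of m] by simp
  qed
qed
end
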